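(* Let $X \in \mathbb{R}^{N\times D}$ and $y \in \mathbb{R}^N$, and suppose the rows of $X$ (with corresponding entries of $y$) are partitioned into $E$ subsets, giving blocks $X_i \in \mathbb{R}^{N_i \times D}$, $y_i\in\mathbb{R}^{N_i}$ for $i\in[E]$, so that $X^\top X = \sum_i X_i^\top X_i$ and $X^\top y = \sum_i X_i^\top y_i$. Let $$w^* = (X^\top X)^{\dagger} X^\top y, \qquad w_i^* = (X_i^\top X_i)^{\dagger} X_i^\top y_i \quad (i\in[E]),$$ the minimum-norm least-squares solutions of $\min_w \|Xw-y\|^2$ and $\min_{w_i}\|X_iw_i-y_i\|^2$ respectively. Let $U_1,\dots,U_E$ be matrices with orthonormal columns whose column spaces are mutually orthogonal subspaces of $\mathbb{R}^D$ with $\sum_{i=1}^E U_iU_i^\top = I_D$. Let $\epsilon_1 \ge 0$ be such that $$\big\|U_iU_i^\top (X^\top X)^{\dagger} - (X_i^\top X_i)^{\dagger}\big\|_2 \le \epsilon_1 \quad\text{for all } i\in[E],$$ and let $\epsilon_2\ge 0$ be such that for all $i\neq j$ and every $z$ in the column space of $X_j^\top$, $\|(X_i^\top X_i)^{\dagger} z\| \le \epsilon_2\|z\|$. Then $$\|w^*\|^2 \ge \sum_{i=1}^E \Big( \Big\lfloor \|w_i^*\| - \epsilon_1 \|X^\top y\| - \epsilon_2 \sum_{j\neq i}\|X_j^\top y_j\| \Big\rfloor_+\Big)^2,$$ where $\lfloor a\rfloor_+ = \max(a,0)$.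
   Context: $^{\dagger}$ denotes the Moore–Penrose pseudo-inverse, $\|\cdot\|$ the Euclidean norm on vectors, and $\|\cdot\|_2$ the spectral norm on matrices. $[E]=\{1,\dots,E\}$. The Lipschitz constant of the linear map $x\mapsto \langle w,x\rangle$ is $\|w\|$; $w^*$ represents a dense linear model and $w_i^*$ the linear expert $i$ under fixed routing of subset $i$ to expert $i$. *)

theory Defs
  imports "HOL-Analysis.Analysis"
begin

definition pinv :: "real^'m^'n \<Rightarrow> real^'n^'m" where
  "pinv A = (THE B. A ** B ** A = A \<and> B ** A ** B = B \<and>
                    transpose (A ** B) = A ** B \<and> transpose (B ** A) = B ** A)"

definition spec_norm :: "real^'m^'n \<Rightarrow> real" where
  "spec_norm M = onorm (\<lambda>x. M *v x)"

definition outer :: "real^'d \<Rightarrow> real^'d \<Rightarrow> real^'d^'d" where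
  "outer u v = (\<chi> r s. u $ r * v $ s)"

text \<open>Block i of the rows (rows not in block i are set to zero; this gives the same
  Gram matrix X_i^T X_i, vector X_i^T y_i and row space as the block itself).\<close>
definition blockM :: "('n \<Rightarrow> nat) \<Rightarrow> nat \<Rightarrow> real^'d^'n \<Rightarrow> real^'d^'n" where
  "blockM p i X = (\<chi> r. if p r = i then X $ r else 0)"

definition blockV :: "('n \<Rightarrow> nat) \<Rightarrow> nat \<Rightarrow> real^'n \<Rightarrow> real^'n" where
  "blockV p i y = (\<chi> r. if p r = i then y $ r else 0)"

definition pos_part :: "real \<Rightarrow> real" where
  "pos_part a = max a 0"

end

theory Submission imports Defs begin

lemma mv_in_span_columns:
  fixes A :: "real^'n^'m"
  shows "A *v x \<in> span (columns A)"
proof -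
  have "A *v x = (\<Sum>i\<in>UNIV. x$i *\<^sub>R column i A)"
    by (simp add: matrix_vector_mult_def column_def vec_eq_iff sum_component mult.commute)
  moreover have "(\<Sum>i\<in>UNIV. x$i *\<^sub>R column i A) \<in> span (columns A)"
    by (intro span_sum span_mul span_base) (auto simp: columns_def)
  ultimately show ?thesis by simp
qed

lemma mv_sum_right: "A *v (\<Sum>i\<in>S. f i) = (\<Sum>i\<in>S. A *v f i)"
  by (induction S rule: infinite_finite_induct) (auto simp: matrix_vector_right_distrib)

lemma mv_sum_left: "(\<Sum>i\<in>S. f i) *v v = (\<Sum>i\<in>S. f i *v v)"
  by (induction S rule: infinite_finite_induct) (auto simp: matrix_vector_mult_add_rdistrib)

lemma outer_mv: "outer u u *v v = (u \<bullet> v) *\<^sub>R u"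
  by (simp add: outer_def matrix_vector_mult_def vec_eq_iff inner_vec_def sum_distrib_left mult.commute mult.left_commute)

lemma spec_norm_bound: "norm ((M::real^'m^'n) *v v) \<le> spec_norm M * norm v"
  unfolding spec_norm_def by (rule onorm) simp

lemma block_sum:
  fixes X :: "real^'d^'n" and y :: "real^'n"
  assumes "\<And>r. p r \<in> I" "finite I"
  shows "transpose X *v y = (\<Sum>i\<in>I. transpose (blockM p i X) *v blockV p i y)"
proof -
  have "(transpose X *v y) $ d = (\<Sum>i\<in>I. transpose (blockM p i X) *v blockV p i y) $ d" for d
  proof -
    have "(\<Sum>i\<in>I. transpose (blockM p i X) *v blockV p i y) $ d
       = (\<Sum>i\<in>I. \<Sum>r\<in>UNIV. if p r = i then X$r$d * y$r else 0)"
      by (simp add: sum_component matrix_vector_mult_def transpose_def blockM_def blockV_def if_distrib cong: if_cong)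
    also have "\<dots> = (\<Sum>r\<in>UNIV. \<Sum>i\<in>I. if p r = i then X$r$d * y$r else 0)"
      by (rule sum.swap)
    also have "\<dots> = (\<Sum>r\<in>UNIV. X$r$d * y$r)"
      using assms by (simp add: sum.delta')
    finally show ?thesis by (simp add: matrix_vector_mult_def transpose_def)
  qed
  then show ?thesis by (simp add: vec_eq_iff)
qed

lemma proj_norm:
  fixes u :: "nat \<Rightarrow> real^'d"
  assumes on: "\<And>a b. a < K \<Longrightarrow> b < K \<Longrightarrow> u a \<bullet> u b = (if a = b then 1 else 0)"
  shows "v \<bullet> ((\<Sum>c<K. outer (u c) (u c)) *v v) = (norm ((\<Sum>c<K. outer (u c) (u c)) *v v))\<^sup>2"
proof -
  have P: "(\<Sum>c<K. outer (u c) (u c)) *v v = (\<Sum>c<K. (u c \<bullet> v) *\<^sub>R u c)"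
    by (simp add: mv_sum_left outer_mv)
  have "(norm (\<Sum>c<K. (u c \<bullet> v) *\<^sub>R u c))\<^sup>2 = (\<Sum>c<K. (u c \<bullet> v) *\<^sub>R u c) \<bullet> (\<Sum>c<K. (u c \<bullet> v) *\<^sub>R u c)"
    by (simp add: power2_norm_eq_inner)
  also have "\<dots> = (\<Sum>a<K. \<Sum>b<K. (u a \<bullet> v) * (u b \<bullet> v) * (u a \<bullet> u b))"
    by (simp add: inner_sum_left inner_sum_right sum_distrib_left mult.assoc) (metis (no_types, lifting) inner_commute sum.cong)
  also have "\<dots> = (\<Sum>a<K. (u a \<bullet> v) * (u a \<bullet> v))"
    by (rule sum.cong[OF refl]) (simp add: on if_distrib sum.delta cong: if_cong)
  also have "\<dots> = v \<bullet> (\<Sum>c<K. (u c \<bullet> v) *\<^sub>R u c)"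
    by (simp add: inner_sum_right inner_commute)
  finally show ?thesis using P by simp
qed
theorem theorem1:
  fixes X :: "real^'d^'n" and y :: "real^'n"
    and E :: nat and p :: "'n \<Rightarrow> nat"
    and U :: "nat \<Rightarrow> nat \<Rightarrow> real^'d" and k :: "nat \<Rightarrow> nat"
    and \<epsilon>1 \<epsilon>2 :: real
  assumes part: "\<And>r. p r \<in> {1..E}"
    and part_ne: "\<And>i. i \<in> {1..E} \<Longrightarrow> \<exists>r. p r = i"
    and U_orthonormal: "\<And>i a b. i \<in> {1..E} \<Longrightarrow> a < k i \<Longrightarrow> b < k i \<Longrightarrow>
                          U i a \<bullet> U i b = (if a = b then 1 else 0)"
    and U_orth: "\<And>i j a b. i \<in> {1..E} \<Longrightarrow> j \<in> {1..E} \<Longrightarrow> i \<noteq> j \<Longrightarrow>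
                          a < k i \<Longrightarrow> b < k j \<Longrightarrow> U i a \<bullet> U j b = 0"
    and U_sum: "(\<Sum>i\<in>{1..E}. \<Sum>c<k i. outer (U i c) (U i c)) = mat 1"
    and eps1_nonneg: "\<epsilon>1 \<ge> 0"
    and eps1: "\<And>i. i \<in> {1..E} \<Longrightarrow>
        spec_norm ((\<Sum>c<k i. outer (U i c) (U i c)) ** pinv (transpose X ** X)
                   - pinv (transpose (blockM p i X) ** blockM p i X)) \<le> \<epsilon>1"
    and eps2_nonneg: "\<epsilon>2 \<ge> 0"
    and eps2: "\<And>i j z. i \<in> {1..E} \<Longrightarrow> j \<in> {1..E} \<Longrightarrow> i \<noteq> j \<Longrightarrow>
        z \<in> span (columns (transpose (blockM p j X))) \<Longrightarrow>
        norm (pinv (transpose (blockM p i X) ** blockM p i X) *v z) \<le> \<epsilon>2 * norm z"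
  shows "(norm (pinv (transpose X ** X) *v (transpose X *v y)))\<^sup>2 \<ge>
    (\<Sum>i\<in>{1..E}. (pos_part
        (norm (pinv (transpose (blockM p i X) ** blockM p i X) *v
               (transpose (blockM p i X) *v blockV p i y))
         - \<epsilon>1 * norm (transpose X *v y)
         - \<epsilon>2 * (\<Sum>j\<in>{1..E} - {i}. norm (transpose (blockM p j X) *v blockV p j y))))\<^sup>2)"
proof -
  let ?A = "pinv (transpose X ** X)"
  let ?b = "transpose X *v y"
  let ?w = "?A *v ?b"
  define P where "P i = (\<Sum>c<k i. outer (U i c) (U i c))" for i
  define Ai where "Ai i = pinv (transpose (blockM p i X) ** blockM p i X)" for i
  define bi where "bi i = transpose (blockM p i X) *v blockV p i y" for i
  define L where "L i = norm (Ai i *v bi i) - \<epsilon>1 * norm ?b - \<epsilon>2 * (\<Sum>j\<in>{1..E} - {i}. norm (bi j))" for i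
  have bsum: "?b = (\<Sum>j\<in>{1..E}. bi j)"
    unfolding bi_def by (rule block_sum) (use part in auto)
  have step: "(pos_part (L i))\<^sup>2 \<le> (norm (P i *v ?w))\<^sup>2" if i: "i \<in> {1..E}" for i
  proof -
    have e1: "norm (P i *v ?w - Ai i *v ?b) \<le> \<epsilon>1 * norm ?b"
    proof -
      have "P i *v ?w - Ai i *v ?b = (P i ** ?A - Ai i) *v ?b"
        by (simp add: matrix_vector_mult_diff_rdistrib matrix_vector_mul_assoc)
      also have "norm \<dots> \<le> spec_norm (P i ** ?A - Ai i) * norm ?b" by (rule spec_norm_bound)
      also have "\<dots> \<le> \<epsilon>1 * norm ?b"
        using eps1[OF i] by (intro mult_right_mono) (auto simp: P_def Ai_def)
      finally show ?thesis .
    qed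
    have split: "Ai i *v ?b = Ai i *v bi i + (\<Sum>j\<in>{1..E} - {i}. Ai i *v bi j)"
      using i unfolding bsum mv_sum_right by (simp add: sum.remove)
    have e2: "norm (\<Sum>j\<in>{1..E} - {i}. Ai i *v bi j) \<le> \<epsilon>2 * (\<Sum>j\<in>{1..E} - {i}. norm (bi j))"
    proof -
      have "norm (\<Sum>j\<in>{1..E} - {i}. Ai i *v bi j) \<le> (\<Sum>j\<in>{1..E} - {i}. norm (Ai i *v bi j))"
        by (rule norm_sum)
      also have "\<dots> \<le> (\<Sum>j\<in>{1..E} - {i}. \<epsilon>2 * norm (bi j))"
      proof (rule sum_mono)
        fix j assume j: "j \<in> {1..E} - {i}"
        show "norm (Ai i *v bi j) \<le> \<epsilon>2 * norm (bi j)"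
          unfolding Ai_def bi_def
          using i j eps2[of i j, OF _ _ _ mv_in_span_columns] by auto
      qed
      also have "\<dots> = \<epsilon>2 * (\<Sum>j\<in>{1..E} - {i}. norm (bi j))" by (simp add: sum_distrib_left)
      finally show ?thesis .
    qed
    have "norm (Ai i *v bi i) \<le> norm (Ai i *v ?b) + norm (\<Sum>j\<in>{1..E} - {i}. Ai i *v bi j)"
      using split norm_triangle_ineq4[of "Ai i *v ?b" "\<Sum>j\<in>{1..E} - {i}. Ai i *v bi j"] by simp
    moreover have "norm (Ai i *v ?b) \<le> norm (P i *v ?w) + norm (P i *v ?w - Ai i *v ?b)"
      using norm_triangle_ineq4[of "P i *v ?w" "P i *v ?w - Ai i *v ?b"] by simp
    ultimately have "L i \<le> norm (P i *v ?w)"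
      using e1 e2 unfolding L_def by linarith
    then have "pos_part (L i) \<le> norm (P i *v ?w)" "0 \<le> pos_part (L i)"
      by (auto simp: pos_part_def)
    then show ?thesis by (simp add: power_mono)
  qed
  have "(norm ?w)\<^sup>2 = ?w \<bullet> (mat 1 *v ?w)" by (simp add: power2_norm_eq_inner)
  also have "\<dots> = (\<Sum>i\<in>{1..E}. ?w \<bullet> (P i *v ?w))"
    unfolding U_sum[symmetric] P_def by (simp add: mv_sum_left inner_sum_right)
  also have "\<dots> = (\<Sum>i\<in>{1..E}. (norm (P i *v ?w))\<^sup>2)"
    unfolding P_def by (rule sum.cong[OF refl], rule proj_norm, rule U_orthonormal) auto
  finally have "(norm ?w)\<^sup>2 = (\<Sum>i\<in>{1..E}. (norm (P i *v ?w))\<^sup>2)" .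
  moreover have "(\<Sum>i\<in>{1..E}. (pos_part (L i))\<^sup>2) \<le> (\<Sum>i\<in>{1..E}. (norm (P i *v ?w))\<^sup>2)"
    by (rule sum_mono) (rule step)
  ultimately show ?thesis unfolding L_def Ai_def bi_def by simp
qed
end
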